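(* Let $R$ be a commutative ring and $(A,d)$ a differential graded $R$-algebra such that every dg-simple left dg-module over $(A,d)$ is acyclic. Then every left dg-module over $(A,d)$ of finite dg-composition length is acyclic. In particular, if $(A,d)$, as a left dg-module over itself, has finite dg-composition length, then $(A,d)$ is acyclic.
   Context: A differential graded (dg) $R$-algebra $(A,d)$ is a $\mathbb{Z}$-graded $R$-algebra $A$ with an $R$-linear degree-$1$ endomorphism $d$, $d^2=0$, $d(ab)=d(a)b+(-1)^{|a|}a\,d(b)$ for homogeneous $a,b$. A left dg-module $(M,\delta)$ is a graded left $A$-module with a degree-$1$ map $\delta$, $\delta^2=0$, $\delta(am)=d(a)m+(-1)^{|a|}a\,\delta(m)$; dg-submodules are graded submodules stable under $\delta$; $(S,\delta)$ is dg-simple if $S\neq0$ and its only dg-submodules are $0,S$. A dg-module has finite dg-composition length $n$ if it has a chain of dg-submodules $0=M_0\subset M_1\subset\dots\subset M_n=M$ with each $M_i/M_{i-1}$ dg-simple. Acyclic means the homology $\ker\delta/\operatorname{im}\delta$ vanishes. *)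

theory Defs
  imports "HOL-Algebra.Module" "HOL-Algebra.AbelCoset" "HOL-Algebra.RingHom"
begin

text \<open>The underlying additive group is the direct sum of the components:
  every element is uniquely a finite sum of homogeneous components.\<close>

definition graded_decomp :: "('m, 'b) ring_scheme \<Rightarrow> (int \<Rightarrow> 'm set) \<Rightarrow> bool" where
  "graded_decomp M gr \<longleftrightarrow>
     (\<forall>x \<in> carrier M. \<exists>!c. (\<forall>n. c n \<in> gr n) \<and> finite {n. c n \<noteq> \<zero>\<^bsub>M\<^esub>}
                           \<and> x = finsum M c {n. c n \<noteq> \<zero>\<^bsub>M\<^esub>})"

definition sgn_smult :: "('m, 'b) ring_scheme \<Rightarrow> int \<Rightarrow> 'm \<Rightarrow> 'm" where
  "sgn_smult M i x = (if even i then x else \<ominus>\<^bsub>M\<^esub> x)"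

definition graded_alg :: "'r ring \<Rightarrow> ('r \<Rightarrow> 'a) \<Rightarrow> 'a ring \<Rightarrow> (int \<Rightarrow> 'a set) \<Rightarrow> bool" where
  "graded_alg R alg A Agr \<longleftrightarrow>
     cring R \<and> ring A \<and> alg \<in> ring_hom R A
     \<and> (\<forall>r \<in> carrier R. \<forall>a \<in> carrier A. alg r \<otimes>\<^bsub>A\<^esub> a = a \<otimes>\<^bsub>A\<^esub> alg r)
     \<and> (\<forall>n. additive_subgroup (Agr n) A)
     \<and> (\<forall>n. \<forall>r \<in> carrier R. \<forall>a \<in> Agr n. alg r \<otimes>\<^bsub>A\<^esub> a \<in> Agr n)
     \<and> (\<forall>i j. \<forall>a \<in> Agr i. \<forall>b \<in> Agr j. a \<otimes>\<^bsub>A\<^esub> b \<in> Agr (i + j))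
     \<and> graded_decomp A Agr"

definition dg_alg :: "'r ring \<Rightarrow> ('r \<Rightarrow> 'a) \<Rightarrow> 'a ring \<Rightarrow> (int \<Rightarrow> 'a set) \<Rightarrow> ('a \<Rightarrow> 'a) \<Rightarrow> bool" where
  "dg_alg R alg A Agr d \<longleftrightarrow>
     graded_alg R alg A Agr
     \<and> d \<in> carrier A \<rightarrow> carrier A
     \<and> (\<forall>a \<in> carrier A. \<forall>b \<in> carrier A. d (a \<oplus>\<^bsub>A\<^esub> b) = d a \<oplus>\<^bsub>A\<^esub> d b)
     \<and> (\<forall>r \<in> carrier R. \<forall>a \<in> carrier A. d (alg r \<otimes>\<^bsub>A\<^esub> a) = alg r \<otimes>\<^bsub>A\<^esub> d a)
     \<and> (\<forall>n. d ` Agr n \<subseteq> Agr (n + 1))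
     \<and> (\<forall>a \<in> carrier A. d (d a) = \<zero>\<^bsub>A\<^esub>)
     \<and> (\<forall>i j. \<forall>a \<in> Agr i. \<forall>b \<in> Agr j.
           d (a \<otimes>\<^bsub>A\<^esub> b) = d a \<otimes>\<^bsub>A\<^esub> b \<oplus>\<^bsub>A\<^esub> sgn_smult A i (a \<otimes>\<^bsub>A\<^esub> d b))"

text \<open>Data of a (candidate) graded left module with differential: carrier, additive group
  structure (fields zero, add of the ring record; mult/one unused), scalar action of A,
  grading and differential.\<close>
record ('a, 'm) dgmod = "('a, 'm) module" +
  mgr :: "int \<Rightarrow> 'm set"
  mdelta :: "'m \<Rightarrow> 'm"

definition dg_module :: "'a ring \<Rightarrow> (int \<Rightarrow> 'a set) \<Rightarrow> ('a \<Rightarrow> 'a) \<Rightarrow> ('a, 'm) dgmod \<Rightarrow> bool" where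
  "dg_module A Agr d M \<longleftrightarrow>
     abelian_group M
     \<and> (\<forall>a \<in> carrier A. \<forall>m \<in> carrier M. a \<odot>\<^bsub>M\<^esub> m \<in> carrier M)
     \<and> (\<forall>a \<in> carrier A. \<forall>b \<in> carrier A. \<forall>m \<in> carrier M.
           (a \<oplus>\<^bsub>A\<^esub> b) \<odot>\<^bsub>M\<^esub> m = a \<odot>\<^bsub>M\<^esub> m \<oplus>\<^bsub>M\<^esub> b \<odot>\<^bsub>M\<^esub> m)
     \<and> (\<forall>a \<in> carrier A. \<forall>m \<in> carrier M. \<forall>n \<in> carrier M.
           a \<odot>\<^bsub>M\<^esub> (m \<oplus>\<^bsub>M\<^esub> n) = a \<odot>\<^bsub>M\<^esub> m \<oplus>\<^bsub>M\<^esub> a \<odot>\<^bsub>M\<^esub> n)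
     \<and> (\<forall>a \<in> carrier A. \<forall>b \<in> carrier A. \<forall>m \<in> carrier M.
           (a \<otimes>\<^bsub>A\<^esub> b) \<odot>\<^bsub>M\<^esub> m = a \<odot>\<^bsub>M\<^esub> (b \<odot>\<^bsub>M\<^esub> m))
     \<and> (\<forall>m \<in> carrier M. \<one>\<^bsub>A\<^esub> \<odot>\<^bsub>M\<^esub> m = m)
     \<and> (\<forall>n. additive_subgroup (mgr M n) M)
     \<and> (\<forall>i j. \<forall>a \<in> Agr i. \<forall>m \<in> mgr M j. a \<odot>\<^bsub>M\<^esub> m \<in> mgr M (i + j))
     \<and> graded_decomp M (mgr M)
     \<and> mdelta M \<in> carrier M \<rightarrow> carrier M
     \<and> (\<forall>m \<in> carrier M. \<forall>n \<in> carrier M. mdelta M (m \<oplus>\<^bsub>M\<^esub> n) = mdelta M m \<oplus>\<^bsub>M\<^esub> mdelta M n)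
     \<and> (\<forall>n. mdelta M ` mgr M n \<subseteq> mgr M (n + 1))
     \<and> (\<forall>m \<in> carrier M. mdelta M (mdelta M m) = \<zero>\<^bsub>M\<^esub>)
     \<and> (\<forall>i. \<forall>a \<in> Agr i. \<forall>m \<in> carrier M.
           mdelta M (a \<odot>\<^bsub>M\<^esub> m) = d a \<odot>\<^bsub>M\<^esub> m \<oplus>\<^bsub>M\<^esub> sgn_smult M i (a \<odot>\<^bsub>M\<^esub> mdelta M m))"

text \<open>dg-submodules: graded submodules (containing all homogeneous components of their
  elements) stable under the differential.\<close>
definition dg_submod :: "'a ring \<Rightarrow> ('a, 'm) dgmod \<Rightarrow> 'm set \<Rightarrow> bool" where
  "dg_submod A M N \<longleftrightarrow>
     additive_subgroup N M
     \<and> (\<forall>a \<in> carrier A. \<forall>m \<in> N. a \<odot>\<^bsub>M\<^esub> m \<in> N)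
     \<and> (\<forall>m \<in> N. \<forall>c. ((\<forall>n. c n \<in> mgr M n) \<and> finite {n. c n \<noteq> \<zero>\<^bsub>M\<^esub>}
                        \<and> m = finsum M c {n. c n \<noteq> \<zero>\<^bsub>M\<^esub>}) \<longrightarrow> (\<forall>n. c n \<in> N))
     \<and> mdelta M ` N \<subseteq> N"

definition dg_simple :: "'a ring \<Rightarrow> (int \<Rightarrow> 'a set) \<Rightarrow> ('a \<Rightarrow> 'a) \<Rightarrow> ('a, 'm) dgmod \<Rightarrow> bool" where
  "dg_simple A Agr d S \<longleftrightarrow>
     dg_module A Agr d S \<and> carrier S \<noteq> {\<zero>\<^bsub>S\<^esub>}
     \<and> (\<forall>N. dg_submod A S N \<longrightarrow> N = {\<zero>\<^bsub>S\<^esub>} \<or> N = carrier S)"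

definition dg_acyclic :: "('a, 'm) dgmod \<Rightarrow> bool" where
  "dg_acyclic M \<longleftrightarrow>
     (\<forall>m \<in> carrier M. mdelta M m = \<zero>\<^bsub>M\<^esub> \<longrightarrow> (\<exists>x \<in> carrier M. m = mdelta M x))"

definition dg_restrict :: "('a, 'm) dgmod \<Rightarrow> 'm set \<Rightarrow> ('a, 'm) dgmod" where
  "dg_restrict M N = M\<lparr>carrier := N, mgr := (\<lambda>n. mgr M n \<inter> N)\<rparr>"

definition qcoset :: "('a, 'm) dgmod \<Rightarrow> 'm set \<Rightarrow> 'm \<Rightarrow> 'm set" where
  "qcoset M N m = {x \<in> carrier M. \<exists>n \<in> N. x = m \<oplus>\<^bsub>M\<^esub> n}"

definition qrep :: "'m set \<Rightarrow> 'm" where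
  "qrep Z = (SOME x. x \<in> Z)"

definition dg_quotient :: "('a, 'm) dgmod \<Rightarrow> 'm set \<Rightarrow> ('a, 'm set) dgmod" where
  "dg_quotient M N =
     \<lparr>carrier = qcoset M N ` carrier M,
      mult = (\<lambda>Z Y. qcoset M N (qrep Z \<oplus>\<^bsub>M\<^esub> qrep Y)),
      one = qcoset M N \<zero>\<^bsub>M\<^esub>,
      zero = qcoset M N \<zero>\<^bsub>M\<^esub>,
      add = (\<lambda>Z Y. qcoset M N (qrep Z \<oplus>\<^bsub>M\<^esub> qrep Y)),
      smult = (\<lambda>a Z. qcoset M N (a \<odot>\<^bsub>M\<^esub> qrep Z)),
      mgr = (\<lambda>n. qcoset M N ` mgr M n),
      mdelta = (\<lambda>Z. qcoset M N (mdelta M (qrep Z)))\<rparr>"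

definition finite_dg_length :: "'a ring \<Rightarrow> (int \<Rightarrow> 'a set) \<Rightarrow> ('a \<Rightarrow> 'a) \<Rightarrow> ('a, 'm) dgmod \<Rightarrow> bool" where
  "finite_dg_length A Agr d M \<longleftrightarrow>
     (\<exists>(n::nat) Ms. Ms 0 = {\<zero>\<^bsub>M\<^esub>} \<and> Ms n = carrier M
        \<and> (\<forall>i \<le> n. dg_submod A M (Ms i))
        \<and> (\<forall>i < n. Ms i \<subseteq> Ms (Suc i)
                   \<and> dg_simple A Agr d (dg_quotient (dg_restrict M (Ms (Suc i))) (Ms i))))"

definition regular_dgmod :: "'a ring \<Rightarrow> (int \<Rightarrow> 'a set) \<Rightarrow> ('a \<Rightarrow> 'a) \<Rightarrow> ('a, 'a) dgmod" where
  "regular_dgmod A Agr d =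
     \<lparr>carrier = carrier A, mult = mult A, one = one A, zero = zero A, add = add A,
      smult = mult A, mgr = Agr, mdelta = d\<rparr>"

end

theory Submission
  imports Defs
begin

definition transp :: "('a,'b) dgmod \<Rightarrow> ('b \<Rightarrow> 'c) \<Rightarrow> ('c \<Rightarrow> 'b) \<Rightarrow> ('a,'c) dgmod" where
"transp Q h g = \<lparr>carrier = h ` carrier Q, mult = (\<lambda>x y. h (mult Q (g x) (g y))), one = h (one Q),
   zero = h (zero Q), add = (\<lambda>x y. h (add Q (g x) (g y))), smult = (\<lambda>a x. h (smult Q a (g x))),
   mgr = (\<lambda>n. h ` mgr Q n), mdelta = (\<lambda>x. h (mdelta Q (g x)))\<rparr>"

lemma asgI:
  assumes "abelian_group G" "H \<subseteq> carrier G" "\<zero>\<^bsub>G\<^esub> \<in> H"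
    "\<And>x y. x\<in>H \<Longrightarrow> y\<in>H \<Longrightarrow> x \<oplus>\<^bsub>G\<^esub> y \<in> H" "\<And>x. x\<in>H \<Longrightarrow> \<ominus>\<^bsub>G\<^esub> x \<in> H"
  shows "additive_subgroup H G"
proof -
  interpret abelian_group G by fact
  show ?thesis apply (rule additive_subgroupI) apply (rule add.subgroupI)
    using assms by (auto simp: a_inv_def)
qed

locale tr = fixes A :: "'a ring" and Agr d and Q :: "('a,'b) dgmod" and h :: "'b \<Rightarrow> 'c" and g
  assumes dm: "dg_module A Agr d Q" and gh: "\<And>Z. Z \<in> carrier Q \<Longrightarrow> g (h Z) = Z"
    and agr: "\<And>i. Agr i \<subseteq> carrier A" and dA: "\<And>a. a \<in> carrier A \<Longrightarrow> d a \<in> carrier A"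
begin

abbreviation "S \<equiv> transp Q h g"

lemma S_simps[simp]: "carrier S = h ` carrier Q" "add S x y = h (add Q (g x) (g y))"
  "zero S = h (zero Q)" "smult S a x = h (smult Q a (g x))" "mgr S n = h ` mgr Q n"
  "mdelta S x = h (mdelta Q (g x))"
  by (simp_all add: transp_def)

lemma hg: "x \<in> h ` carrier Q \<Longrightarrow> h (g x) = x" "x \<in> h ` carrier Q \<Longrightarrow> g x \<in> carrier Q"
  using gh by auto

lemma Qag: "abelian_group Q" using dm unfolding dg_module_def by auto

lemma Sag: "abelian_group S"
proof -
  interpret Q: abelian_group Q by (rule Qag)
  show ?thesis
  proof (rule abelian_groupI)
    fix x y z assume x: "x \<in> carrier S" and y: "y \<in> carrier S" and z: "z \<in> carrier S"
    obtain X where X: "X \<in> carrier Q" "x = h X" using x by auto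
    obtain Y where Y: "Y \<in> carrier Q" "y = h Y" using y by auto
    obtain Z where Z: "Z \<in> carrier Q" "z = h Z" using z by auto
    show "x \<oplus>\<^bsub>S\<^esub> y \<in> carrier S" using X Y gh by simp
    show "x \<oplus>\<^bsub>S\<^esub> y \<oplus>\<^bsub>S\<^esub> z = x \<oplus>\<^bsub>S\<^esub> (y \<oplus>\<^bsub>S\<^esub> z)"
      using X Y Z gh by (simp add: Q.a_assoc)
    show "x \<oplus>\<^bsub>S\<^esub> y = y \<oplus>\<^bsub>S\<^esub> x" using X Y gh by (simp add: Q.a_comm)
  next
    show "\<zero>\<^bsub>S\<^esub> \<in> carrier S" by simp
  next
    fix x assume x: "x \<in> carrier S"
    obtain X where X: "X \<in> carrier Q" "x = h X" using x by auto
    show "\<zero>\<^bsub>S\<^esub> \<oplus>\<^bsub>S\<^esub> x = x" using X gh by simp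
    have "h (\<ominus>\<^bsub>Q\<^esub> X) \<in> carrier S" using X by simp
    moreover have "h (\<ominus>\<^bsub>Q\<^esub> X) \<oplus>\<^bsub>S\<^esub> x = \<zero>\<^bsub>S\<^esub>" using X gh by (simp add: Q.l_neg)
    ultimately show "\<exists>y\<in>carrier S. y \<oplus>\<^bsub>S\<^esub> x = \<zero>\<^bsub>S\<^esub>" by blast
  qed
qed

lemma inv_tr: "x \<in> carrier S \<Longrightarrow> \<ominus>\<^bsub>S\<^esub> x = h (\<ominus>\<^bsub>Q\<^esub> (g x))"
proof -
  interpret Q: abelian_group Q by (rule Qag)
  interpret S: abelian_group S by (rule Sag)
  assume x: "x \<in> carrier S"
  show ?thesis
    apply (rule S.minus_equality)
    using x by (auto simp: gh Q.l_neg)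
qed

lemma fin_tr: "finite I \<Longrightarrow> c \<in> I \<rightarrow> carrier S \<Longrightarrow> finsum S c I = h (finsum Q (g \<circ> c) I)"
proof (induction I rule: finite_induct)
  case empty
  interpret Q: abelian_group Q by (rule Qag)
  interpret S: abelian_group S by (rule Sag)
  show ?case by simp
next
  case (insert a F)
  interpret Q: abelian_group Q by (rule Qag)
  interpret S: abelian_group S by (rule Sag)
  have cF: "c \<in> F \<rightarrow> carrier S" and ca: "c a \<in> carrier S" using insert.prems by auto
  have gc: "g \<circ> c \<in> F \<rightarrow> carrier Q" using cF hg(2) unfolding Pi_def by auto
  have gca: "g (c a) \<in> carrier Q" using ca hg(2) by simp
  have IH: "finsum S c F = h (finsum Q (g \<circ> c) F)" using insert.IH cF by blast
  have fc: "finsum Q (g \<circ> c) F \<in> carrier Q" by (rule Q.finsum_closed[OF gc])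
  have "finsum S c (insert a F) = c a \<oplus>\<^bsub>S\<^esub> finsum S c F"
    by (rule S.finsum_insert[OF insert.hyps cF ca])
  also have "\<dots> = h (g (c a) \<oplus>\<^bsub>Q\<^esub> g (h (finsum Q (g \<circ> c) F)))"
    unfolding IH by simp
  also have "g (h (finsum Q (g \<circ> c) F)) = finsum Q (g \<circ> c) F" by (rule gh[OF fc])
  also have "g (c a) \<oplus>\<^bsub>Q\<^esub> finsum Q (g \<circ> c) F = finsum Q (g \<circ> c) (insert a F)"
    using Q.finsum_insert[OF insert.hyps gc] gca by simp
  finally show ?case .
qed


lemma Qf: "\<forall>a \<in> carrier A. \<forall>m \<in> carrier Q. a \<odot>\<^bsub>Q\<^esub> m \<in> carrier Q"
     "\<forall>a \<in> carrier A. \<forall>b \<in> carrier A. \<forall>m \<in> carrier Q.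
           (a \<oplus>\<^bsub>A\<^esub> b) \<odot>\<^bsub>Q\<^esub> m = a \<odot>\<^bsub>Q\<^esub> m \<oplus>\<^bsub>Q\<^esub> b \<odot>\<^bsub>Q\<^esub> m"
     "(\<forall>a \<in> carrier A. \<forall>m \<in> carrier Q. \<forall>n \<in> carrier Q.
           a \<odot>\<^bsub>Q\<^esub> (m \<oplus>\<^bsub>Q\<^esub> n) = a \<odot>\<^bsub>Q\<^esub> m \<oplus>\<^bsub>Q\<^esub> a \<odot>\<^bsub>Q\<^esub> n)"
     "(\<forall>a \<in> carrier A. \<forall>b \<in> carrier A. \<forall>m \<in> carrier Q.
           (a \<otimes>\<^bsub>A\<^esub> b) \<odot>\<^bsub>Q\<^esub> m = a \<odot>\<^bsub>Q\<^esub> (b \<odot>\<^bsub>Q\<^esub> m))"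
     "(\<forall>m \<in> carrier Q. \<one>\<^bsub>A\<^esub> \<odot>\<^bsub>Q\<^esub> m = m)"
     "(\<forall>n. additive_subgroup (mgr Q n) Q)"
     "(\<forall>i j. \<forall>a \<in> Agr i. \<forall>m \<in> mgr Q j. a \<odot>\<^bsub>Q\<^esub> m \<in> mgr Q (i + j))"
     "graded_decomp Q (mgr Q)"
     "mdelta Q \<in> carrier Q \<rightarrow> carrier Q"
     "(\<forall>m \<in> carrier Q. \<forall>n \<in> carrier Q. mdelta Q (m \<oplus>\<^bsub>Q\<^esub> n) = mdelta Q m \<oplus>\<^bsub>Q\<^esub> mdelta Q n)"
     "(\<forall>n. mdelta Q ` mgr Q n \<subseteq> mgr Q (n + 1))"
     "(\<forall>m \<in> carrier Q. mdelta Q (mdelta Q m) = \<zero>\<^bsub>Q\<^esub>)"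
     "(\<forall>i. \<forall>a \<in> Agr i. \<forall>m \<in> carrier Q.
           mdelta Q (a \<odot>\<^bsub>Q\<^esub> m) = d a \<odot>\<^bsub>Q\<^esub> m \<oplus>\<^bsub>Q\<^esub> sgn_smult Q i (a \<odot>\<^bsub>Q\<^esub> mdelta Q m))"
  using dm unfolding dg_module_def by auto

lemma mgr_sub: "mgr Q n \<subseteq> carrier Q"
  using Qf(6) additive_subgroup.a_subset by blast

lemma sgn_tr: "x \<in> carrier S \<Longrightarrow> sgn_smult S i x = h (sgn_smult Q i (g x))"
  using inv_tr hg by (auto simp: sgn_smult_def)

lemma Q_sgn_closed: "x \<in> carrier Q \<Longrightarrow> sgn_smult Q i x \<in> carrier Q"
proof -
  interpret Q: abelian_group Q by (rule Qag)
  show "x \<in> carrier Q \<Longrightarrow> sgn_smult Q i x \<in> carrier Q" by (simp add: sgn_smult_def)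
qed

lemma h_inj: "X \<in> carrier Q \<Longrightarrow> Y \<in> carrier Q \<Longrightarrow> h X = h Y \<longleftrightarrow> X = Y"
  using gh by metis

lemma graded_S: "graded_decomp S (mgr S)"
  unfolding graded_decomp_def
proof
  interpret Q: abelian_group Q by (rule Qag)
  fix x assume "x \<in> carrier S"
  then obtain X where X: "X \<in> carrier Q" "x = h X" by auto
  have ex: "\<exists>!c. (\<forall>n. c n \<in> mgr Q n) \<and> finite {n. c n \<noteq> \<zero>\<^bsub>Q\<^esub>}
                           \<and> X = finsum Q c {n. c n \<noteq> \<zero>\<^bsub>Q\<^esub>}"
    using Qf(8) X(1) unfolding graded_decomp_def by blast
  then obtain c' where c': "(\<forall>n. c' n \<in> mgr Q n) \<and> finite {n. c' n \<noteq> \<zero>\<^bsub>Q\<^esub>}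
                           \<and> X = finsum Q c' {n. c' n \<noteq> \<zero>\<^bsub>Q\<^esub>}"
     and cu: "\<And>c. (\<forall>n. c n \<in> mgr Q n) \<and> finite {n. c n \<noteq> \<zero>\<^bsub>Q\<^esub>}
                           \<and> X = finsum Q c {n. c n \<noteq> \<zero>\<^bsub>Q\<^esub>} \<Longrightarrow> c = c'"
    by (elim ex1E) blast
  have c'c: "c' n \<in> carrier Q" for n using c' mgr_sub by blast
  have eqset: "{n. h (c' n) \<noteq> h \<zero>\<^bsub>Q\<^esub>} = {n. c' n \<noteq> \<zero>\<^bsub>Q\<^esub>}"
  proof -
    have "h (c' n) = h \<zero>\<^bsub>Q\<^esub> \<longleftrightarrow> c' n = \<zero>\<^bsub>Q\<^esub>" for n using h_inj[OF c'c Q.zero_closed] .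
    thus ?thesis by simp
  qed
  have ghc: "g \<circ> (h \<circ> c') = c'" using gh c'c by (simp add: fun_eq_iff)
  have fin: "finite {n. c' n \<noteq> \<zero>\<^bsub>Q\<^esub>}" using c' by blast
  have hcP: "h \<circ> c' \<in> {n. c' n \<noteq> \<zero>\<^bsub>Q\<^esub>} \<rightarrow> carrier S"
    unfolding Pi_def S_simps using c'c by auto
  show "\<exists>!c. (\<forall>n. c n \<in> mgr S n) \<and> finite {n. c n \<noteq> \<zero>\<^bsub>S\<^esub>} \<and> x = finsum S c {n. c n \<noteq> \<zero>\<^bsub>S\<^esub>}"
  proof (rule ex1I[of _ "h \<circ> c'"])
    have "finsum S (h \<circ> c') {n. c' n \<noteq> \<zero>\<^bsub>Q\<^esub>} = h (finsum Q (g \<circ> (h \<circ> c')) {n. c' n \<noteq> \<zero>\<^bsub>Q\<^esub>})"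
      by (rule fin_tr[OF fin hcP])
    also have "\<dots> = x" unfolding ghc using c' X by simp
    finally have e1: "x = finsum S (h \<circ> c') {n. (h \<circ> c') n \<noteq> \<zero>\<^bsub>S\<^esub>}" using eqset by simp
    have e2: "\<forall>n. (h \<circ> c') n \<in> mgr S n" using c' by simp
    have e3: "finite {n. (h \<circ> c') n \<noteq> \<zero>\<^bsub>S\<^esub>}" using fin eqset by simp
    show "(\<forall>n. (h \<circ> c') n \<in> mgr S n) \<and> finite {n. (h \<circ> c') n \<noteq> \<zero>\<^bsub>S\<^esub>} \<and> x = finsum S (h \<circ> c') {n. (h \<circ> c') n \<noteq> \<zero>\<^bsub>S\<^esub>}"
      using e1 e2 e3 by blast
  next
    fix c assume c: "(\<forall>n. c n \<in> mgr S n) \<and> finite {n. c n \<noteq> \<zero>\<^bsub>S\<^esub>} \<and> x = finsum S c {n. c n \<noteq> \<zero>\<^bsub>S\<^esub>}"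
    have c1: "\<And>n. c n \<in> h ` mgr Q n" using c by simp
    have cc: "c n \<in> h ` carrier Q" for n using c1[of n] mgr_sub by blast
    have gcm: "g (c n) \<in> mgr Q n" for n
    proof -
      obtain y where "y \<in> mgr Q n" "c n = h y" using c1[of n] by blast
      moreover have "y \<in> carrier Q" using \<open>y \<in> mgr Q n\<close> mgr_sub by blast
      ultimately show ?thesis using gh by simp
    qed
    have hgc: "h (g (c n)) = c n" for n using cc[of n] hg(1) by blast
    have eqs: "{n. c n \<noteq> \<zero>\<^bsub>S\<^esub>} = {n. g (c n) \<noteq> \<zero>\<^bsub>Q\<^esub>}"
    proof -
      have "c n = h \<zero>\<^bsub>Q\<^esub> \<longleftrightarrow> g (c n) = \<zero>\<^bsub>Q\<^esub>" for n using hgc[of n] gh[OF Q.zero_closed] by metis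
      thus ?thesis by simp
    qed
    have fS: "finite {n. c n \<noteq> \<zero>\<^bsub>S\<^esub>}" using c[THEN conjunct2, THEN conjunct1] .
    have cP: "c \<in> {n. c n \<noteq> \<zero>\<^bsub>S\<^esub>} \<rightarrow> carrier S" unfolding S_simps Pi_def using cc by simp
    have gC: "g (c n) \<in> carrier Q" for n using gcm[of n] mgr_sub by blast
    have gcP: "g \<circ> c \<in> {n. c n \<noteq> \<zero>\<^bsub>S\<^esub>} \<rightarrow> carrier Q" using gC by simp
    have "x = finsum S c {n. c n \<noteq> \<zero>\<^bsub>S\<^esub>}" using c[THEN conjunct2, THEN conjunct2] .
    also have "\<dots> = h (finsum Q (g \<circ> c) {n. c n \<noteq> \<zero>\<^bsub>S\<^esub>})"
      by (rule fin_tr[OF fS cP])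
    finally have "g x = finsum Q (g \<circ> c) {n. c n \<noteq> \<zero>\<^bsub>S\<^esub>}"
      using gh Q.finsum_closed[OF gcP] by simp
    hence e1: "X = finsum Q (g \<circ> c) {n. (g \<circ> c) n \<noteq> \<zero>\<^bsub>Q\<^esub>}"
      using X gh eqs by simp
    have e2: "\<forall>n. (g \<circ> c) n \<in> mgr Q n" using gcm by simp
    have e3: "finite {n. (g \<circ> c) n \<noteq> \<zero>\<^bsub>Q\<^esub>}" using fS eqs by simp
    have gc: "g \<circ> c = c'" by (rule cu) (intro conjI e1 e2 e3)
    show "c = h \<circ> c'"
    proof (rule ext)
      fix n show "c n = (h \<circ> c') n" using hgc[of n] fun_cong[OF gc, of n] by simp
    qed
  qed
qed

lemma Qsm: "a \<in> carrier A \<Longrightarrow> m \<in> carrier Q \<Longrightarrow> a \<odot>\<^bsub>Q\<^esub> m \<in> carrier Q"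
  using Qf(1) by blast
lemma Qdl: "m \<in> carrier Q \<Longrightarrow> mdelta Q m \<in> carrier Q"
  using Qf(9) by blast

lemma S_mod: "dg_module A Agr d S"
proof -
  interpret Q: abelian_group Q by (rule Qag)
  have sub: "additive_subgroup (mgr S n) S" for n
  proof (rule asgI[OF Sag])
    interpret G: additive_subgroup "mgr Q n" Q using Qf(6) by blast
    show "mgr S n \<subseteq> carrier S" using mgr_sub by auto
    show "\<zero>\<^bsub>S\<^esub> \<in> mgr S n" by simp
    show "x \<oplus>\<^bsub>S\<^esub> y \<in> mgr S n" if "x \<in> mgr S n" "y \<in> mgr S n" for x y
      using that mgr_sub gh by (auto; (metis G.a_closed gh image_eqI subsetD)?)
    show "\<ominus>\<^bsub>S\<^esub> x \<in> mgr S n" if "x \<in> mgr S n" for x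
      using that mgr_sub gh inv_tr by (auto; (metis G.a_inv_closed gh image_eqI subsetD)?)
  qed
  show ?thesis
    unfolding dg_module_def
  proof (intro conjI)
    show "abelian_group S" by (rule Sag)
    show "\<forall>n. additive_subgroup (mgr S n) S" using sub by blast
    show "graded_decomp S (mgr S)" by (rule graded_S)
    show "\<forall>a\<in>carrier A. \<forall>m\<in>carrier S. a \<odot>\<^bsub>S\<^esub> m \<in> carrier S"
      using Qsm gh by auto
    show "\<forall>a\<in>carrier A. \<forall>b\<in>carrier A. \<forall>m\<in>carrier S. (a \<oplus>\<^bsub>A\<^esub> b) \<odot>\<^bsub>S\<^esub> m = a \<odot>\<^bsub>S\<^esub> m \<oplus>\<^bsub>S\<^esub> b \<odot>\<^bsub>S\<^esub> m"
      using Qsm gh Qf(2) by auto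
    show "\<forall>a\<in>carrier A. \<forall>m\<in>carrier S. \<forall>n\<in>carrier S. a \<odot>\<^bsub>S\<^esub> (m \<oplus>\<^bsub>S\<^esub> n) = a \<odot>\<^bsub>S\<^esub> m \<oplus>\<^bsub>S\<^esub> a \<odot>\<^bsub>S\<^esub> n"
      using Qsm gh Qf(3) by auto
    show "\<forall>a\<in>carrier A. \<forall>b\<in>carrier A. \<forall>m\<in>carrier S. (a \<otimes>\<^bsub>A\<^esub> b) \<odot>\<^bsub>S\<^esub> m = a \<odot>\<^bsub>S\<^esub> (b \<odot>\<^bsub>S\<^esub> m)"
      using Qsm gh Qf(4) by auto
    show "\<forall>m\<in>carrier S. \<one>\<^bsub>A\<^esub> \<odot>\<^bsub>S\<^esub> m = m"
      using gh Qf(5) by auto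
    show "\<forall>i j. \<forall>a\<in>Agr i. \<forall>m\<in>mgr S j. a \<odot>\<^bsub>S\<^esub> m \<in> mgr S (i + j)"
      using gh Qf(7) mgr_sub by (auto; (metis image_eqI subsetD)?)
    show "mdelta S \<in> carrier S \<rightarrow> carrier S"
      using gh Qdl by auto
    show "\<forall>m\<in>carrier S. \<forall>n\<in>carrier S. mdelta S (m \<oplus>\<^bsub>S\<^esub> n) = mdelta S m \<oplus>\<^bsub>S\<^esub> mdelta S n"
      using gh Qdl Qf(10) by auto
    show "\<forall>n. mdelta S ` mgr S n \<subseteq> mgr S (n + 1)"
      using gh Qf(11) mgr_sub by (auto; (metis image_eqI image_subset_iff subsetD)?)
    show "\<forall>m\<in>carrier S. mdelta S (mdelta S m) = \<zero>\<^bsub>S\<^esub>"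
      using gh Qdl Qf(12) by auto
    show "\<forall>i. \<forall>a\<in>Agr i. \<forall>m\<in>carrier S. mdelta S (a \<odot>\<^bsub>S\<^esub> m) = d a \<odot>\<^bsub>S\<^esub> m \<oplus>\<^bsub>S\<^esub> sgn_smult S i (a \<odot>\<^bsub>S\<^esub> mdelta S m)"
    proof (intro allI ballI)
      fix i a m assume a: "a \<in> Agr i" and m: "m \<in> carrier S"
      then obtain M where M: "M \<in> carrier Q" "m = h M" by auto
      have aA: "a \<in> carrier A" and daA: "d a \<in> carrier A" using a agr dA by auto
      show "mdelta S (a \<odot>\<^bsub>S\<^esub> m) = d a \<odot>\<^bsub>S\<^esub> m \<oplus>\<^bsub>S\<^esub> sgn_smult S i (a \<odot>\<^bsub>S\<^esub> mdelta S m)"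
        using M a aA daA Qsm Qdl Q_sgn_closed Qf(13) gh
        by (simp add: sgn_tr)
    qed
  qed
qed

end

context tr begin

lemma sub_tr:
  assumes N: "dg_submod A S N"
  shows "dg_submod A Q (g ` N)" "N \<subseteq> carrier S"
proof -
  interpret Q: abelian_group Q by (rule Qag)
  have all: "additive_subgroup N S \<and> (\<forall>a \<in> carrier A. \<forall>m \<in> N. a \<odot>\<^bsub>S\<^esub> m \<in> N)
    \<and> (\<forall>m \<in> N. \<forall>c. ((\<forall>n. c n \<in> mgr S n) \<and> finite {n. c n \<noteq> \<zero>\<^bsub>S\<^esub>}
                        \<and> m = finsum S c {n. c n \<noteq> \<zero>\<^bsub>S\<^esub>}) \<longrightarrow> (\<forall>n. c n \<in> N))
    \<and> mdelta S ` N \<subseteq> N"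
    using N unfolding dg_submod_def .
  note N1 = all[THEN conjunct1] and N2 = all[THEN conjunct2, THEN conjunct1]
    and N3 = all[THEN conjunct2, THEN conjunct2, THEN conjunct1]
    and N4 = all[THEN conjunct2, THEN conjunct2, THEN conjunct2]
  interpret NS: additive_subgroup N S by (rule N1)
  show NC: "N \<subseteq> carrier S" by (rule NS.a_subset)
  have NC2: "x \<in> N \<Longrightarrow> x \<in> h ` carrier Q" for x using NC by auto
  have hgN: "x \<in> N \<Longrightarrow> h (g x) = x" for x using NC2 hg(1) by blast
  have gNC: "x \<in> N \<Longrightarrow> g x \<in> carrier Q" for x using NC2 hg(2) by blast
  have hN: "X \<in> carrier Q \<Longrightarrow> X \<in> g ` N \<longleftrightarrow> h X \<in> N" for X
  proof
    assume X: "X \<in> carrier Q" "X \<in> g ` N"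
    then obtain y where "y \<in> N" "X = g y" by blast
    thus "h X \<in> N" using hgN by simp
  next
    assume X: "X \<in> carrier Q" "h X \<in> N"
    hence "g (h X) \<in> g ` N" by blast
    thus "X \<in> g ` N" using gh[OF X(1)] by simp
  qed
  have hN2: "X \<in> carrier Q \<Longrightarrow> h X \<in> N \<Longrightarrow> X \<in> g ` N" for X using hN by blast
  show "dg_submod A Q (g ` N)"
    unfolding dg_submod_def
  proof (intro conjI)
    show "additive_subgroup (g ` N) Q"
    proof (rule asgI[OF Qag])
      show "g ` N \<subseteq> carrier Q" using gNC by blast
      have "zero S \<in> N" by (rule NS.zero_closed)
      hence "h \<zero>\<^bsub>Q\<^esub> \<in> N" by (simp only: S_simps)
      thus "\<zero>\<^bsub>Q\<^esub> \<in> g ` N" by (rule hN2[OF Q.zero_closed])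
      show "x \<oplus>\<^bsub>Q\<^esub> y \<in> g ` N" if xy: "x \<in> g ` N" "y \<in> g ` N" for x y
      proof -
        obtain a where a: "a \<in> N" "x = g a" using xy(1) by blast
        obtain b where b: "b \<in> N" "y = g b" using xy(2) by blast
        have "a \<oplus>\<^bsub>S\<^esub> b \<in> N" using a(1) b(1) by (rule NS.a_closed)
        hence "h (x \<oplus>\<^bsub>Q\<^esub> y) \<in> N" unfolding a(2) b(2) by (simp only: S_simps)
        moreover have "x \<oplus>\<^bsub>Q\<^esub> y \<in> carrier Q" unfolding a(2) b(2) using gNC[OF a(1)] gNC[OF b(1)] by (rule Q.add.m_closed)
        ultimately show ?thesis using hN2 by blast
      qed
      show "\<ominus>\<^bsub>Q\<^esub> x \<in> g ` N" if xx: "x \<in> g ` N" for x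
      proof -
        obtain a where a: "a \<in> N" "x = g a" using xx by blast
        have "\<ominus>\<^bsub>S\<^esub> a \<in> N" using a(1) by (rule NS.a_inv_closed)
        moreover have "\<ominus>\<^bsub>S\<^esub> a = h (\<ominus>\<^bsub>Q\<^esub> x)" unfolding a(2) by (rule inv_tr) (use a(1) NC in blast)
        ultimately have "h (\<ominus>\<^bsub>Q\<^esub> x) \<in> N" by simp
        moreover have "\<ominus>\<^bsub>Q\<^esub> x \<in> carrier Q" unfolding a(2) using gNC[OF a(1)] by (rule Q.a_inv_closed)
        ultimately show ?thesis using hN2 by blast
      qed
    qed
    show "\<forall>a\<in>carrier A. \<forall>m\<in>g ` N. a \<odot>\<^bsub>Q\<^esub> m \<in> g ` N"
    proof (intro ballI)
      fix a m assume a: "a \<in> carrier A" and "m \<in> g ` N"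
      then obtain y where y: "y \<in> N" "m = g y" by blast
      have "a \<odot>\<^bsub>S\<^esub> y \<in> N" using N2 a y by blast
      hence "h (a \<odot>\<^bsub>Q\<^esub> m) \<in> N" using y by simp
      moreover have "a \<odot>\<^bsub>Q\<^esub> m \<in> carrier Q" using Qsm a y gNC by blast
      ultimately show "a \<odot>\<^bsub>Q\<^esub> m \<in> g ` N" using hN by blast
    qed
    show "mdelta Q ` g ` N \<subseteq> g ` N"
    proof
      fix z assume "z \<in> mdelta Q ` g ` N"
      then obtain y where y: "y \<in> N" "z = mdelta Q (g y)" by blast
      have "mdelta S y \<in> N" using N4 y by blast
      hence "h z \<in> N" using y by simp
      moreover have "z \<in> carrier Q" using Qdl y gNC by blast
      ultimately show "z \<in> g ` N" using hN by blast
    qed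
    show "\<forall>m\<in>g ` N. \<forall>c. (\<forall>n. c n \<in> mgr Q n) \<and> finite {n. c n \<noteq> \<zero>\<^bsub>Q\<^esub>} \<and> m = finsum Q c {n. c n \<noteq> \<zero>\<^bsub>Q\<^esub>} \<longrightarrow>
            (\<forall>n. c n \<in> g ` N)"
    proof (intro ballI allI impI)
      fix m c n assume "m \<in> g ` N" and c: "(\<forall>n. c n \<in> mgr Q n) \<and> finite {n. c n \<noteq> \<zero>\<^bsub>Q\<^esub>} \<and> m = finsum Q c {n. c n \<noteq> \<zero>\<^bsub>Q\<^esub>}"
      then obtain y where y: "y \<in> N" "m = g y" by blast
      have c1: "\<forall>n. c n \<in> mgr Q n" using c[THEN conjunct1] .
      have fin: "finite {n. c n \<noteq> \<zero>\<^bsub>Q\<^esub>}" using c[THEN conjunct2, THEN conjunct1] .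
      have msum: "m = finsum Q c {n. c n \<noteq> \<zero>\<^bsub>Q\<^esub>}" using c[THEN conjunct2, THEN conjunct2] .
      have cc: "c k \<in> carrier Q" for k using c1 mgr_sub by blast
      have eqs: "{k. h (c k) \<noteq> \<zero>\<^bsub>S\<^esub>} = {k. c k \<noteq> \<zero>\<^bsub>Q\<^esub>}"
      proof -
        have "h (c k) = h \<zero>\<^bsub>Q\<^esub> \<longleftrightarrow> c k = \<zero>\<^bsub>Q\<^esub>" for k using h_inj[OF cc Q.zero_closed] .
        thus ?thesis by simp
      qed
      have ghc: "g \<circ> (h \<circ> c) = c" using gh cc by (simp add: fun_eq_iff)
      have hcP: "h \<circ> c \<in> {k. c k \<noteq> \<zero>\<^bsub>Q\<^esub>} \<rightarrow> carrier S"
        unfolding Pi_def S_simps using cc by auto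
      have "finsum S (h \<circ> c) {k. c k \<noteq> \<zero>\<^bsub>Q\<^esub>} = h (finsum Q (g \<circ> (h \<circ> c)) {k. c k \<noteq> \<zero>\<^bsub>Q\<^esub>})"
        by (rule fin_tr[OF fin hcP])
      also have "\<dots> = h m" unfolding ghc msum ..
      also have "h m = y" using y hgN by simp
      finally have e1: "y = finsum S (h \<circ> c) {k. (h \<circ> c) k \<noteq> \<zero>\<^bsub>S\<^esub>}" using eqs by simp
      have e2: "\<forall>k. (h \<circ> c) k \<in> mgr S k" using c1 by simp
      have e3: "finite {k. (h \<circ> c) k \<noteq> \<zero>\<^bsub>S\<^esub>}" using fin eqs by simp
      have "(h \<circ> c) n \<in> N" by (rule N3[rule_format, OF y(1)]) (intro conjI e2 e3 e1)
      hence "h (c n) \<in> N" by simp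
      thus "c n \<in> g ` N" using hN cc by blast
    qed
  qed
qed

lemma S_simple:
  assumes "dg_simple A Agr d Q" shows "dg_simple A Agr d S"
proof -
  interpret Q: abelian_group Q by (rule Qag)
  have ne: "carrier Q \<noteq> {\<zero>\<^bsub>Q\<^esub>}" and sm: "\<And>N. dg_submod A Q N \<Longrightarrow> N = {\<zero>\<^bsub>Q\<^esub>} \<or> N = carrier Q"
    using assms unfolding dg_simple_def by blast+
  have gS: "g ` carrier S = carrier Q"
  proof
    show "g ` carrier S \<subseteq> carrier Q" using hg(2) by auto
    show "carrier Q \<subseteq> g ` carrier S"
    proof
      fix X assume X: "X \<in> carrier Q"
      hence "g (h X) \<in> g ` carrier S" by simp
      thus "X \<in> g ` carrier S" using gh[OF X] by simp
    qed
  qed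
  show ?thesis unfolding dg_simple_def
  proof (intro conjI allI impI)
    show "dg_module A Agr d S" by (rule S_mod)
    show "carrier S \<noteq> {\<zero>\<^bsub>S\<^esub>}"
    proof
      assume "carrier S = {\<zero>\<^bsub>S\<^esub>}"
      hence "g ` carrier S = {g \<zero>\<^bsub>S\<^esub>}" by simp
      hence "carrier Q = {g (h \<zero>\<^bsub>Q\<^esub>)}" using gS by simp
      thus False using ne gh[OF Q.zero_closed] by simp
    qed
    fix N assume N: "dg_submod A S N"
    have NC: "N \<subseteq> carrier S" by (rule sub_tr(2)[OF N])
    have hgN: "h ` g ` N = N"
    proof
      show "h ` g ` N \<subseteq> N"
      proof
        fix z assume "z \<in> h ` g ` N"
        then obtain y where "y \<in> N" "z = h (g y)" by blast
        moreover have "y \<in> h ` carrier Q" using NC \<open>y \<in> N\<close> by auto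
        ultimately show "z \<in> N" using hg(1) by simp
      qed
      show "N \<subseteq> h ` g ` N"
      proof
        fix y assume y: "y \<in> N"
        have "y \<in> h ` carrier Q" using NC y by auto
        hence "y = h (g y)" using hg(1) by simp
        thus "y \<in> h ` g ` N" using y by blast
      qed
    qed
    from sm[OF sub_tr(1)[OF N]] show "N = {\<zero>\<^bsub>S\<^esub>} \<or> N = carrier S"
    proof
      assume "g ` N = {\<zero>\<^bsub>Q\<^esub>}" hence "h ` g ` N = {\<zero>\<^bsub>S\<^esub>}" by simp
      thus ?thesis using hgN by simp
    next
      assume "g ` N = carrier Q" hence "h ` g ` N = carrier S" by simp
      thus ?thesis using hgN by simp
    qed
  qed
qed

lemma acyc_back: "dg_acyclic S \<Longrightarrow> dg_acyclic Q"
  unfolding dg_acyclic_def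
proof (intro ballI impI)
  interpret Q: abelian_group Q by (rule Qag)
  fix m assume ac: "\<forall>m\<in>carrier S. mdelta S m = \<zero>\<^bsub>S\<^esub> \<longrightarrow> (\<exists>x\<in>carrier S. m = mdelta S x)"
    and m: "m \<in> carrier Q" and dm0: "mdelta Q m = \<zero>\<^bsub>Q\<^esub>"
  have hm: "h m \<in> carrier S" using m by simp
  have "mdelta S (h m) = h (mdelta Q m)" using gh[OF m] by simp
  hence "mdelta S (h m) = \<zero>\<^bsub>S\<^esub>" using dm0 by simp
  then obtain x where x: "x \<in> carrier S" "h m = mdelta S x" using ac hm by blast
  have gx: "g x \<in> carrier Q" using x(1) hg(2) by simp
  have "h m = h (mdelta Q (g x))" using x(2) by simp
  hence "g (h m) = g (h (mdelta Q (g x)))" by simp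
  hence "m = mdelta Q (g x)" using gh[OF m] gh[OF Qdl[OF gx]] by simp
  thus "\<exists>x\<in>carrier Q. m = mdelta Q x" using gx by blast
qed

end

lemma restr_simps[simp]: "carrier (dg_restrict M N) = N" "add (dg_restrict M N) = add M"
  "zero (dg_restrict M N) = zero M" "mdelta (dg_restrict M N) = mdelta M"
  "smult (dg_restrict M N) = smult M"
  by (simp_all add: dg_restrict_def)

lemma quot_simps[simp]: "carrier (dg_quotient M N) = qcoset M N ` carrier M"
  "zero (dg_quotient M N) = qcoset M N \<zero>\<^bsub>M\<^esub>"
  "mdelta (dg_quotient M N) = (\<lambda>Z. qcoset M N (mdelta M (qrep Z)))"
  by (simp_all add: dg_quotient_def)

locale chainctx =
  fixes M :: "('a, 'b) dgmod" and N N' :: "'b set"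
  assumes ag: "abelian_group M"
    and dcl: "\<And>x. x \<in> carrier M \<Longrightarrow> mdelta M x \<in> carrier M"
    and dadd: "\<And>x y. x \<in> carrier M \<Longrightarrow> y \<in> carrier M \<Longrightarrow> mdelta M (x \<oplus>\<^bsub>M\<^esub> y) = mdelta M x \<oplus>\<^bsub>M\<^esub> mdelta M y"
    and dd: "\<And>x. x \<in> carrier M \<Longrightarrow> mdelta M (mdelta M x) = \<zero>\<^bsub>M\<^esub>"
    and N: "additive_subgroup N M" "mdelta M ` N \<subseteq> N"
    and N': "additive_subgroup N' M" "mdelta M ` N' \<subseteq> N'"
    and NN: "N \<subseteq> N'"
begin

abbreviation "M' \<equiv> dg_restrict M N'"
abbreviation "qc \<equiv> qcoset M' N"

interpretation G: abelian_group M by (rule ag)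
interpretation HN: additive_subgroup N M by (rule N(1))
interpretation HN': additive_subgroup N' M by (rule N'(1))

lemma qc_def': "qc m = {x \<in> N'. \<exists>n\<in>N. x = m \<oplus>\<^bsub>M\<^esub> n}"
  by (simp add: qcoset_def)

lemma NC: "N \<subseteq> carrier M" by (rule HN.a_subset)
lemma NC': "N' \<subseteq> carrier M" by (rule HN'.a_subset)

lemma mem_qc: "m \<in> N' \<Longrightarrow> m \<in> qc m"
  unfolding qc_def' using NC' by (auto intro!: bexI[of _ "\<zero>\<^bsub>M\<^esub>"])

lemma qrep_in: "m \<in> N' \<Longrightarrow> qrep (qc m) \<in> qc m"
  unfolding qrep_def using mem_qc by (metis someI)

lemma qc_shift: assumes "a \<in> N'" "n0 \<in> N" shows "qc (a \<oplus>\<^bsub>M\<^esub> n0) = qc a"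
proof -
  have a: "a \<in> carrier M" and n0: "n0 \<in> carrier M" using assms NC NC' by auto
  show ?thesis unfolding qc_def'
  proof (rule Collect_cong, rule conj_cong[OF refl])
    fix x assume xN': "x \<in> N'"
    show "(\<exists>n\<in>N. x = a \<oplus>\<^bsub>M\<^esub> n0 \<oplus>\<^bsub>M\<^esub> n) = (\<exists>n\<in>N. x = a \<oplus>\<^bsub>M\<^esub> n)"
    proof
      assume "\<exists>n\<in>N. x = a \<oplus>\<^bsub>M\<^esub> n0 \<oplus>\<^bsub>M\<^esub> n"
      then obtain n where nn: "n \<in> N" "x = a \<oplus>\<^bsub>M\<^esub> n0 \<oplus>\<^bsub>M\<^esub> n" by blast
      have nC: "n \<in> carrier M" using nn NC by blast
      have "n0 \<oplus>\<^bsub>M\<^esub> n \<in> N" using assms(2) nn(1) by (rule HN.a_closed)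
      moreover have "x = a \<oplus>\<^bsub>M\<^esub> (n0 \<oplus>\<^bsub>M\<^esub> n)" using nn(2) a n0 nC by (simp add: G.a_assoc)
      ultimately show "\<exists>n\<in>N. x = a \<oplus>\<^bsub>M\<^esub> n" by blast
    next
      assume "\<exists>n\<in>N. x = a \<oplus>\<^bsub>M\<^esub> n"
      then obtain n where nn: "n \<in> N" "x = a \<oplus>\<^bsub>M\<^esub> n" by blast
      have nC: "n \<in> carrier M" using nn NC by blast
      have "\<ominus>\<^bsub>M\<^esub> n0 \<oplus>\<^bsub>M\<^esub> n \<in> N" using HN.a_inv_closed[OF assms(2)] nn(1) by (rule HN.a_closed)
      moreover have "x = a \<oplus>\<^bsub>M\<^esub> n0 \<oplus>\<^bsub>M\<^esub> (\<ominus>\<^bsub>M\<^esub> n0 \<oplus>\<^bsub>M\<^esub> n)"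
        using nn(2) a n0 nC by (simp add: G.a_assoc G.r_neg2)
      ultimately show "\<exists>n\<in>N. x = a \<oplus>\<^bsub>M\<^esub> n0 \<oplus>\<^bsub>M\<^esub> n" by blast
    qed
  qed
qed

lemma qc_zero: "qc \<zero>\<^bsub>M\<^esub> = N"
proof -
  have "x \<in> N' \<and> (\<exists>n\<in>N. x = \<zero>\<^bsub>M\<^esub> \<oplus>\<^bsub>M\<^esub> n) \<longleftrightarrow> x \<in> N" for x
  proof
    assume "x \<in> N' \<and> (\<exists>n\<in>N. x = \<zero>\<^bsub>M\<^esub> \<oplus>\<^bsub>M\<^esub> n)"
    then obtain n where "n \<in> N" "x = \<zero>\<^bsub>M\<^esub> \<oplus>\<^bsub>M\<^esub> n" by blast
    moreover have "n \<in> carrier M" using \<open>n \<in> N\<close> NC by blast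
    ultimately show "x \<in> N" by simp
  next
    assume x: "x \<in> N"
    hence "x \<in> carrier M" using NC by blast
    hence "x = \<zero>\<^bsub>M\<^esub> \<oplus>\<^bsub>M\<^esub> x" by simp
    thus "x \<in> N' \<and> (\<exists>n\<in>N. x = \<zero>\<^bsub>M\<^esub> \<oplus>\<^bsub>M\<^esub> n)" using x NN by blast
  qed
  thus ?thesis unfolding qc_def' by blast
qed

lemma qc_N: "y \<in> N \<Longrightarrow> qc y = N"
  using qc_shift[of "\<zero>\<^bsub>M\<^esub>" y] qc_zero NC by simp

lemma qrep_qc: "Z \<in> qc ` N' \<Longrightarrow> qc (qrep Z) = Z"
proof -
  assume "Z \<in> qc ` N'"
  then obtain x where x: "x \<in> N'" "Z = qc x" by auto
  then obtain n0 where "n0 \<in> N" "qrep Z = x \<oplus>\<^bsub>M\<^esub> n0" using qrep_in[of x] unfolding qc_def' by auto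
  thus ?thesis using qc_shift x by simp
qed

lemma qrep_N': "Z \<in> qc ` N' \<Longrightarrow> qrep Z \<in> N'"
  using qrep_in unfolding qc_def' by auto

lemma step:
  assumes QA: "dg_acyclic (dg_quotient M' N)" and NA: "dg_acyclic (dg_restrict M N)"
  shows "dg_acyclic M'"
  unfolding dg_acyclic_def restr_simps
proof (intro ballI impI)
  fix m assume m: "m \<in> N'" and dm0: "mdelta M m = \<zero>\<^bsub>M\<^esub>"
  have mC: "m \<in> carrier M" using m NC' by auto
  obtain n0 where n0: "n0 \<in> N" "qrep (qc m) = m \<oplus>\<^bsub>M\<^esub> n0" using qrep_in[OF m] unfolding qc_def' by auto
  have n0C: "n0 \<in> carrier M" using n0 NC by auto
  have "mdelta M (qrep (qc m)) = mdelta M n0" using n0 n0C mC dm0 dadd dcl by simp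
  have dn0: "mdelta M n0 \<in> N" using N(2) n0(1) by blast
  have "mdelta (dg_quotient M' N) (qc m) = qc (mdelta M (qrep (qc m)))" by simp
  also have "\<dots> = N" unfolding \<open>mdelta M (qrep (qc m)) = mdelta M n0\<close> by (rule qc_N[OF dn0])
  also have "N = zero (dg_quotient M' N)" using qc_zero by simp
  finally have Z0: "mdelta (dg_quotient M' N) (qc m) = zero (dg_quotient M' N)" .
  have Zc: "qc m \<in> carrier (dg_quotient M' N)" using m by simp
  have "\<exists>X\<in>carrier (dg_quotient M' N). qc m = mdelta (dg_quotient M' N) X"
    using QA[unfolded dg_acyclic_def] Zc Z0 by blast
  then obtain X where X0: "X \<in> carrier (dg_quotient M' N)" "qc m = mdelta (dg_quotient M' N) X" by blast
  have X: "X \<in> qc ` N'" "qc m = qc (mdelta M (qrep X))" using X0 by simp_all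
  define x' where "x' = qrep X"
  have x': "x' \<in> N'" using qrep_N'[OF X(1)] x'_def by simp
  have x'C: "x' \<in> carrier M" using x' NC' by auto
  have "m \<in> qc (mdelta M x')" using mem_qc[OF m] X x'_def by simp
  then obtain n where n: "n \<in> N" "m = mdelta M x' \<oplus>\<^bsub>M\<^esub> n" unfolding qc_def' by auto
  have nC: "n \<in> carrier M" using n NC by auto
  have "mdelta M n = \<zero>\<^bsub>M\<^esub>" using dm0 n x'C nC dadd dcl dd by simp
  moreover have "n \<in> carrier (dg_restrict M N)" using n by simp
  ultimately have "\<exists>y\<in>carrier (dg_restrict M N). n = mdelta (dg_restrict M N) y"
    using NA[unfolded dg_acyclic_def] by simp
  then obtain y where y: "y \<in> N" "n = mdelta M y" by auto
  have yC: "y \<in> carrier M" using y NC by auto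
  have "m = mdelta M (x' \<oplus>\<^bsub>M\<^esub> y)" using n y x'C yC dadd by simp
  moreover have "x' \<oplus>\<^bsub>M\<^esub> y \<in> N'" using x' y NN by auto
  ultimately show "\<exists>x\<in>N'. m = mdelta M x" by blast
qed

end

lemma main_gen:
  fixes M :: "('a, 'b) dgmod" and A :: "'a ring"
  assumes sa: "\<forall>S :: ('a, 'b) dgmod. dg_simple A Agr d S \<longrightarrow> dg_acyclic S"
    and agr: "\<And>i. Agr i \<subseteq> carrier A" and dA: "\<And>a. a \<in> carrier A \<Longrightarrow> d a \<in> carrier A"
    and ag: "abelian_group M"
    and dcl: "\<And>x. x \<in> carrier M \<Longrightarrow> mdelta M x \<in> carrier M"
    and dadd: "\<And>x y. x \<in> carrier M \<Longrightarrow> y \<in> carrier M \<Longrightarrow> mdelta M (x \<oplus>\<^bsub>M\<^esub> y) = mdelta M x \<oplus>\<^bsub>M\<^esub> mdelta M y"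
    and dd: "\<And>x. x \<in> carrier M \<Longrightarrow> mdelta M (mdelta M x) = \<zero>\<^bsub>M\<^esub>"
    and fl: "finite_dg_length A Agr d M"
  shows "dg_acyclic M"
proof -
  obtain n Ms where Ms0: "Ms 0 = {\<zero>\<^bsub>M\<^esub>}" and Msn: "Ms n = carrier M"
    and sub: "\<And>i. i \<le> n \<Longrightarrow> dg_submod A M (Ms i)"
    and ch: "\<And>i. i < n \<Longrightarrow> Ms i \<subseteq> Ms (Suc i) \<and> dg_simple A Agr d (dg_quotient (dg_restrict M (Ms (Suc i))) (Ms i))"
    using fl unfolding finite_dg_length_def by blast
  have "i \<le> n \<longrightarrow> dg_acyclic (dg_restrict M (Ms i))" for i
  proof (induction i)
    case 0
    show ?case using Ms0 unfolding dg_acyclic_def by auto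
  next
    case (Suc i)
    show ?case
    proof
      assume si: "Suc i \<le> n"
      hence IH: "dg_acyclic (dg_restrict M (Ms i))" using Suc.IH by simp
      have s1: "dg_submod A M (Ms i)" and s2: "dg_submod A M (Ms (Suc i))" using sub si by auto
      have c: "Ms i \<subseteq> Ms (Suc i)" and simp: "dg_simple A Agr d (dg_quotient (dg_restrict M (Ms (Suc i))) (Ms i))"
        using ch si by auto
      note s1a = s1[unfolded dg_submod_def, THEN conjunct1]
        and s1b = s1[unfolded dg_submod_def, THEN conjunct2, THEN conjunct2, THEN conjunct2]
      note s2a = s2[unfolded dg_submod_def, THEN conjunct1]
        and s2b = s2[unfolded dg_submod_def, THEN conjunct2, THEN conjunct2, THEN conjunct2]
      have "chainctx M (Ms i) (Ms (Suc i))"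
        by (rule chainctx.intro[OF ag dcl dadd dd s1a s1b s2a s2b c])
      then interpret C: chainctx M "Ms i" "Ms (Suc i)" .
      let ?Q = "dg_quotient (dg_restrict M (Ms (Suc i))) (Ms i)"
      have dmQ: "dg_module A Agr d ?Q" using simp unfolding dg_simple_def by (elim conjE)
      have "tr A Agr d ?Q qrep (qcoset (dg_restrict M (Ms (Suc i))) (Ms i))"
      proof (rule tr.intro[OF dmQ])
        fix Z assume "Z \<in> carrier ?Q"
        hence "Z \<in> qcoset (dg_restrict M (Ms (Suc i))) (Ms i) ` Ms (Suc i)" by (simp only: quot_simps restr_simps)
        thus "qcoset (dg_restrict M (Ms (Suc i))) (Ms i) (qrep Z) = Z" by (rule C.qrep_qc)
      next
        fix j show "Agr j \<subseteq> carrier A" by (rule agr)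
      next
        fix a assume "a \<in> carrier A" thus "d a \<in> carrier A" by (rule dA)
      qed
      then interpret T: tr A Agr d ?Q qrep "qcoset (dg_restrict M (Ms (Suc i))) (Ms i)" .
      have "dg_acyclic ?Q" using T.acyc_back T.S_simple[OF simp] sa by blast
      thus "dg_acyclic (dg_restrict M (Ms (Suc i)))" using C.step IH by blast
    qed
  qed
  hence "dg_acyclic (dg_restrict M (Ms n))" by blast
  hence "dg_acyclic (dg_restrict M (carrier M))" using Msn by simp
  thus ?thesis unfolding dg_acyclic_def by simp
qed



lemma regular_facts:
  assumes dga: "dg_alg R alg A Agr d"
  shows "abelian_group (regular_dgmod A Agr d)"
    and "\<And>i. Agr i \<subseteq> carrier A" and "\<And>a. a \<in> carrier A \<Longrightarrow> d a \<in> carrier A"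
    and "\<And>x y. x \<in> carrier A \<Longrightarrow> y \<in> carrier A \<Longrightarrow> d (x \<oplus>\<^bsub>A\<^esub> y) = d x \<oplus>\<^bsub>A\<^esub> d y"
    and "\<And>x. x \<in> carrier A \<Longrightarrow> d (d x) = \<zero>\<^bsub>A\<^esub>"
proof -
  have ga: "graded_alg R alg A Agr" using dga unfolding dg_alg_def by blast
  have rA: "ring A" using ga unfolding graded_alg_def by blast
  interpret A: ring A by (rule rA)
  have sg: "\<And>n. additive_subgroup (Agr n) A" using ga unfolding graded_alg_def by blast
  show "\<And>i. Agr i \<subseteq> carrier A" using sg additive_subgroup.a_subset by blast
  show "\<And>a. a \<in> carrier A \<Longrightarrow> d a \<in> carrier A" using dga unfolding dg_alg_def by blast
  show "\<And>x y. x \<in> carrier A \<Longrightarrow> y \<in> carrier A \<Longrightarrow> d (x \<oplus>\<^bsub>A\<^esub> y) = d x \<oplus>\<^bsub>A\<^esub> d y"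
    using dga unfolding dg_alg_def by blast
  show "\<And>x. x \<in> carrier A \<Longrightarrow> d (d x) = \<zero>\<^bsub>A\<^esub>" using dga unfolding dg_alg_def by blast
  show "abelian_group (regular_dgmod A Agr d)"
  proof (rule abelian_groupI)
    fix x y z
    assume x: "x \<in> carrier (regular_dgmod A Agr d)" and y: "y \<in> carrier (regular_dgmod A Agr d)"
      and z: "z \<in> carrier (regular_dgmod A Agr d)"
    have x': "x \<in> carrier A" and y': "y \<in> carrier A" and z': "z \<in> carrier A"
      using x y z by (simp_all add: regular_dgmod_def)
    show "x \<oplus>\<^bsub>regular_dgmod A Agr d\<^esub> y \<in> carrier (regular_dgmod A Agr d)"
      using x' y' by (simp add: regular_dgmod_def)
    show "x \<oplus>\<^bsub>regular_dgmod A Agr d\<^esub> y \<oplus>\<^bsub>regular_dgmod A Agr d\<^esub> z =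
          x \<oplus>\<^bsub>regular_dgmod A Agr d\<^esub> (y \<oplus>\<^bsub>regular_dgmod A Agr d\<^esub> z)"
      using x' y' z' by (simp add: regular_dgmod_def A.a_assoc)
    show "x \<oplus>\<^bsub>regular_dgmod A Agr d\<^esub> y = y \<oplus>\<^bsub>regular_dgmod A Agr d\<^esub> x"
      using x' y' by (simp add: regular_dgmod_def A.a_comm)
  next
    show "\<zero>\<^bsub>regular_dgmod A Agr d\<^esub> \<in> carrier (regular_dgmod A Agr d)" by (simp add: regular_dgmod_def)
  next
    fix x assume x: "x \<in> carrier (regular_dgmod A Agr d)"
    have x': "x \<in> carrier A" using x by (simp add: regular_dgmod_def)
    show "\<zero>\<^bsub>regular_dgmod A Agr d\<^esub> \<oplus>\<^bsub>regular_dgmod A Agr d\<^esub> x = x"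
      using x' by (simp add: regular_dgmod_def)
    have "\<ominus>\<^bsub>A\<^esub> x \<in> carrier (regular_dgmod A Agr d)" using x' by (simp add: regular_dgmod_def)
    moreover have "\<ominus>\<^bsub>A\<^esub> x \<oplus>\<^bsub>regular_dgmod A Agr d\<^esub> x = \<zero>\<^bsub>regular_dgmod A Agr d\<^esub>"
      using x' by (simp add: regular_dgmod_def A.l_neg)
    ultimately show "\<exists>y\<in>carrier (regular_dgmod A Agr d). y \<oplus>\<^bsub>regular_dgmod A Agr d\<^esub> x = \<zero>\<^bsub>regular_dgmod A Agr d\<^esub>"
      by blast
  qed
qed

theorem theorem3p9:
  fixes R :: "'r ring" and A :: "'a ring" and alg :: "'r \<Rightarrow> 'a"
    and Agr :: "int \<Rightarrow> 'a set" and d :: "'a \<Rightarrow> 'a"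
  assumes dga: "dg_alg R alg A Agr d"
    and simple_acyclic_m: "\<forall>S :: ('a, 'm) dgmod. dg_simple A Agr d S \<longrightarrow> dg_acyclic S"
    and simple_acyclic_a: "\<forall>S :: ('a, 'a) dgmod. dg_simple A Agr d S \<longrightarrow> dg_acyclic S"
  shows "(\<forall>M :: ('a, 'm) dgmod. dg_module A Agr d M \<and> finite_dg_length A Agr d M \<longrightarrow> dg_acyclic M)
         \<and> (finite_dg_length A Agr d (regular_dgmod A Agr d) \<longrightarrow> dg_acyclic (regular_dgmod A Agr d))"
proof (intro conjI allI impI)
  note rf = regular_facts[OF dga]
  fix M :: "('a, 'm) dgmod"
  assume H: "dg_module A Agr d M \<and> finite_dg_length A Agr d M"
  have dmM: "dg_module A Agr d M" using H by blast
  have ag: "abelian_group M" using dmM unfolding dg_module_def by blast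
  have dcl: "\<And>x. x \<in> carrier M \<Longrightarrow> mdelta M x \<in> carrier M"
    using dmM unfolding dg_module_def by blast
  have dadd: "\<And>x y. x \<in> carrier M \<Longrightarrow> y \<in> carrier M \<Longrightarrow> mdelta M (x \<oplus>\<^bsub>M\<^esub> y) = mdelta M x \<oplus>\<^bsub>M\<^esub> mdelta M y"
    using dmM unfolding dg_module_def by blast
  have dd: "\<And>x. x \<in> carrier M \<Longrightarrow> mdelta M (mdelta M x) = \<zero>\<^bsub>M\<^esub>"
    using dmM unfolding dg_module_def by blast
  show "dg_acyclic M"
    by (rule main_gen[OF simple_acyclic_m rf(2) rf(3) ag dcl dadd dd H[THEN conjunct2]])
next
  note rf = regular_facts[OF dga]
  assume fl: "finite_dg_length A Agr d (regular_dgmod A Agr d)"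
  have dcl: "\<And>x. x \<in> carrier (regular_dgmod A Agr d) \<Longrightarrow> mdelta (regular_dgmod A Agr d) x \<in> carrier (regular_dgmod A Agr d)"
    using rf(3) by (simp add: regular_dgmod_def)
  have dadd: "\<And>x y. x \<in> carrier (regular_dgmod A Agr d) \<Longrightarrow> y \<in> carrier (regular_dgmod A Agr d) \<Longrightarrow>
      mdelta (regular_dgmod A Agr d) (x \<oplus>\<^bsub>regular_dgmod A Agr d\<^esub> y) =
      mdelta (regular_dgmod A Agr d) x \<oplus>\<^bsub>regular_dgmod A Agr d\<^esub> mdelta (regular_dgmod A Agr d) y"
    using rf(4) by (simp add: regular_dgmod_def)
  have dd: "\<And>x. x \<in> carrier (regular_dgmod A Agr d) \<Longrightarrow>
      mdelta (regular_dgmod A Agr d) (mdelta (regular_dgmod A Agr d) x) = \<zero>\<^bsub>regular_dgmod A Agr d\<^esub>"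
    using rf(5) by (simp add: regular_dgmod_def)
  show "dg_acyclic (regular_dgmod A Agr d)"
    by (rule main_gen[OF simple_acyclic_a rf(2) rf(3) rf(1) dcl dadd dd fl])
qed

end
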